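(* Let $m\ge0$ and $n\ge0$ be integers. Then $r_n(q^{2m+1},q^2)$ is divisible by $(-q;q)_n$ and $r_n(-q^m,q)$ is divisible by $(q;q^2)_{\lfloor (n+1)/2\rfloor}$ in $\mathbb{Z}[q]$. More precisely, $$f(n,q^{2m+1},q)=\sum_{j=0}^m(-1)^jq^{j^2}\begin{bmatrix} m\\ j\end{bmatrix}_{q^2}(q^{n-j+1};q)_j\in\mathbb{Z}[q],$$ $$F(2n,q^m,q)=\sum_{k=0}^{\lfloor m/2\rfloor}q^{\binom{2k}{2}}\begin{bmatrix} m\\ 2k\end{bmatrix}_q(q^{2n-2k+2};q^2)_k\in\mathbb{Z}[q],$$ $$F(2n+1,q^m,q)=\sum_{k=0}^{\lfloor (m-1)/2\rfloor}q^{\binom{2k+1}{2}}\begin{bmatrix} m\\ 2k+1\end{bmatrix}_q(q^{2n-2k+2};q^2)_k\in\mathbb{Z}[q].$$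
   Context: $q$ is an indeterminate. $(x;q)_n=\prod_{j=0}^{n-1}(1-q^jx)$. The Gaussian binomial coefficient is $\begin{bmatrix} n\\ j\end{bmatrix}_q=\frac{(q;q)_n}{(q;q)_j(q;q)_{n-j}}$ for $0\le j\le n$ and $0$ otherwise. $r_n(s,q)=\sum_{j=0}^n\begin{bmatrix} n\\ j\end{bmatrix}_q s^j$ (Rogers–Szegö polynomials). The normalized Rogers–Szegö polynomials are $f(n,s,q)=\dfrac{\sum_{j=0}^n s^j\begin{bmatrix} n\\ j\end{bmatrix}_{q^2}}{(-q;q)_n}=\dfrac{r_n(s,q^2)}{(-q;q)_n}$ and $F(n,s,q)=\dfrac{\sum_{j=0}^n(-s)^j\begin{bmatrix} n\\ j\end{bmatrix}_{q}}{(q;q^2)_{\lfloor (n+1)/2\rfloor}}=\dfrac{r_n(-s,q)}{(q;q^2)_{\lfloor (n+1)/2\rfloor}}$. An empty sum is $0$. *)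

theory Defs
  imports "HOL-Computational_Algebra.Polynomial"
begin

definition qpoch :: "'a::comm_ring_1 \<Rightarrow> 'a \<Rightarrow> nat \<Rightarrow> 'a" where
  "qpoch x q n = (\<Prod>j<n. 1 - q ^ j * x)"

definition qbinom :: "'a::idom_divide \<Rightarrow> nat \<Rightarrow> nat \<Rightarrow> 'a" where
  "qbinom q n j = (if j \<le> n then qpoch q q n div (qpoch q q j * qpoch q q (n - j)) else 0)"

definition rs :: "nat \<Rightarrow> 'a::idom_divide \<Rightarrow> 'a \<Rightarrow> 'a" where
  "rs n s q = (\<Sum>j\<le>n. qbinom q n j * s ^ j)"

definition qX :: "int poly" where
  "qX = [:0, 1:]"

end

theory Submission
  imports Defs
begin


lemma qpoch_0[simp]: "qpoch x q 0 = 1" by (simp add: qpoch_def)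
lemma qpoch_Suc: "qpoch x q (Suc n) = qpoch x q n * (1 - q^n * x)" by (simp add: qpoch_def)
lemma qpoch_add: "qpoch x q (a+b) = qpoch x q a * (\<Prod>t<b. 1 - q^(a+t) * x)"
  by (induction b) (simp_all add: qpoch_Suc mult_ac)
lemma qpoch_one: "k>0 \<Longrightarrow> qpoch 1 q k = 0"
  using qpoch_add[of 1 q 1 "k-1"] by (simp add: qpoch_Suc)

fun gb :: "'a::comm_ring_1 \<Rightarrow> nat \<Rightarrow> nat \<Rightarrow> 'a" where
  "gb Q 0 0 = 1" | "gb Q 0 (Suc k) = 0" | "gb Q (Suc n) 0 = 1"
| "gb Q (Suc n) (Suc k) = gb Q n k + Q^(Suc k) * gb Q n (Suc k)"

lemma gb_zero: "n < k \<Longrightarrow> gb Q n k = 0"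
proof (induction n arbitrary: k)
  case 0 thus ?case by (cases k) auto
next
  case (Suc n) thus ?case by (cases k) auto
qed

lemma gb_n0[simp]: "gb Q n 0 = 1" by (cases n) auto

lemma gb_prod: "k \<le> n \<Longrightarrow> gb Q n k * qpoch Q Q k * qpoch Q Q (n-k) = qpoch Q Q n"
proof (induction n arbitrary: k)
  case 0 then show ?case by simp
next
  case (Suc n)
  show ?case
  proof (cases k)
    case 0 then show ?thesis by simp
  next
    case (Suc k')
    show ?thesis
    proof (cases "k' = n")
      case True
      have "gb Q n (Suc n) = 0" by (simp add: gb_zero)
      moreover have "gb Q n n * qpoch Q Q n = qpoch Q Q n" using Suc.IH[of n] by simp
      ultimately show ?thesis using True Suc by (simp add: qpoch_Suc mult.assoc[symmetric])
    next
      case False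
      with Suc Suc.prems have kn: "k' < n" by simp
      define A where "A = qpoch Q Q k'"
      define B where "B = qpoch Q Q (n - Suc k')"
      have h1: "gb Q n k' * A * (B * (1 - Q^(n-k') )) = qpoch Q Q n"
        using Suc.IH[of k'] kn unfolding A_def B_def
        by (metis Suc_diff_Suc less_imp_le_nat power_Suc2 qpoch_Suc mult.commute)
      have h2: "gb Q n (Suc k') * (A * (1 - Q^(Suc k'))) * B = qpoch Q Q n"
        using Suc.IH[of "Suc k'"] kn unfolding A_def B_def
        by (simp add: qpoch_Suc mult.commute)
      have e: "Q^(Suc k') * Q^(n-k') = Q^(Suc n)"
      proof -
        have "Suc k' + (n-k') = Suc n" using kn by simp
        thus ?thesis by (metis power_add)
      qed
      have nk: "qpoch Q Q (n-k') = B * (1 - Q^(n-k'))"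
      proof -
        have "n-k' = Suc (n - Suc k')" using kn by simp
        then show ?thesis unfolding B_def by (metis qpoch_Suc power_Suc2)
      qed
      have "gb Q (Suc n) k * qpoch Q Q k * qpoch Q Q (Suc n - k)
          = (gb Q n k' + Q^(Suc k') * gb Q n (Suc k')) * (A * (1 - Q^(Suc k'))) * (B * (1 - Q^(n-k')))"
        using Suc kn unfolding A_def nk[symmetric]
        by (simp add: qpoch_Suc mult.commute)
      also have "\<dots> = (1 - Q^(Suc k')) * (gb Q n k' * A * (B * (1 - Q^(n-k'))))
           + Q^(Suc k') * (1 - Q^(n-k')) * (gb Q n (Suc k') * (A * (1 - Q^(Suc k'))) * B)"
        by (simp add: algebra_simps)
      also have "\<dots> = qpoch Q Q n * (1 - Q^(Suc k') * Q^(n-k'))"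
        unfolding h1 h2 by (simp add: algebra_simps)
      also have "\<dots> = qpoch Q Q n * (1 - Q^(Suc n))" unfolding e ..
      also have "\<dots> = qpoch Q Q (Suc n)" by (simp add: qpoch_Suc mult.commute)
      finally show ?thesis .
    qed
  qed
qed

context
  fixes Q :: "'a::idom"
  assumes good: "\<And>k. qpoch Q Q k \<noteq> 0"
begin

lemma F3: "gb Q (Suc n) (Suc k) * (1 - Q^Suc k) = (1 - Q^Suc n) * gb Q n k"
proof (cases "k \<le> n")
  case False thus ?thesis by (simp add: gb_zero)
next
  case True
  define c where "c = qpoch Q Q k * qpoch Q Q (n-k)"
  have c0: "c \<noteq> 0" using good unfolding c_def by simp
  have "gb Q (Suc n) (Suc k) * (1 - Q^Suc k) * c = gb Q (Suc n) (Suc k) * qpoch Q Q (Suc k) * qpoch Q Q (Suc n - Suc k)"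
    unfolding c_def by (simp add: qpoch_Suc mult_ac)
  also have "\<dots> = qpoch Q Q (Suc n)" using gb_prod True by (metis Suc_le_mono)
  also have "\<dots> = (1 - Q^Suc n) * gb Q n k * c"
    using gb_prod[OF True, of Q] unfolding c_def by (simp add: qpoch_Suc mult_ac)
  finally show ?thesis using c0 by simp
qed

lemma F2: assumes "i \<le> m" shows "gb Q (Suc m) (Suc i) = gb Q m (Suc i) + Q^(m-i) * gb Q m i"
proof (cases "i = m")
  case True thus ?thesis by (simp add: gb_zero)
next
  case False
  with assms have im: "i < m" by simp
  define c where "c = qpoch Q Q (Suc i) * qpoch Q Q (m-i)"
  have c0: "c \<noteq> 0" using good unfolding c_def by simp
  have mi: "m - i = Suc (m - Suc i)" using im by simp
  have e: "Q^(m-i) * Q^(Suc i) = Q^(Suc m)"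
  proof -
    have "m - i + Suc i = Suc m" using im by simp
    thus ?thesis by (metis power_add)
  qed
  have l: "gb Q (Suc m) (Suc i) * c = qpoch Q Q (Suc m)"
    using gb_prod[of "Suc i" "Suc m" Q] im unfolding c_def by (simp add: mult.assoc)
  have r1: "gb Q m (Suc i) * c = qpoch Q Q m * (1 - Q^(m-i))"
    using gb_prod[of "Suc i" m Q] im unfolding c_def mi
    by (simp add: qpoch_Suc mult_ac)
  have r2: "Q^(m-i) * gb Q m i * c = Q^(m-i) * (1 - Q^Suc i) * qpoch Q Q m"
    using gb_prod[of i m Q] im unfolding c_def
    by (simp add: qpoch_Suc mult_ac)
  have "(gb Q m (Suc i) + Q^(m-i) * gb Q m i) * c = qpoch Q Q m * (1 - Q^(m-i)) + Q^(m-i) * (1 - Q^Suc i) * qpoch Q Q m"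
    using r1 r2 by (simp add: distrib_right)
  also have "\<dots> = qpoch Q Q m * (1 - Q^(m-i) * Q^(Suc i))" by (simp add: algebra_simps)
  also have "\<dots> = qpoch Q Q (Suc m)" unfolding e by (simp add: qpoch_Suc mult.commute)
  finally show ?thesis using l c0 by (metis mult_right_cancel)
qed

end



definition R :: "nat \<Rightarrow> 'a::comm_ring_1 \<Rightarrow> 'a \<Rightarrow> 'a" where
  "R n s Q = (\<Sum>j\<le>n. gb Q n j * s^j)"

lemma R_ext: "n \<le> N \<Longrightarrow> R n s Q = (\<Sum>j\<le>N. gb Q n j * s^j)"
  unfolding R_def by (rule sum.mono_neutral_left) (auto simp: gb_zero)

lemma R_0[simp]: "R 0 s Q = 1" by (simp add: R_def)

lemma R_Pascal: "R (Suc n) s Q = s * R n s Q + R n (Q*s) Q"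
proof -
  have "R (Suc n) s Q = 1 + (\<Sum>i\<le>n. gb Q (Suc n) (Suc i) * s^Suc i)"
    unfolding R_def sum.atMost_Suc_shift by simp
  also have "\<dots> = 1 + s * R n s Q + (\<Sum>i\<le>n. gb Q n (Suc i) * (Q*s)^Suc i)"
    unfolding R_def by (simp add: sum.distrib sum_distrib_left algebra_simps power_mult_distrib)
  also have "R n (Q*s) Q = 1 + (\<Sum>i\<le>n. gb Q n (Suc i) * (Q*s)^Suc i)"
    using R_ext[of n "Suc n" "Q*s" Q] unfolding sum.atMost_Suc_shift by simp
  ultimately show ?thesis by (simp add: algebra_simps)
qed

lemma choose2_Suc: "Suc i choose 2 = i + (i choose 2)"
  by (simp add: numeral_2_eq_2)

lemma choose2_0[simp]: "0 choose 2 = 0" by (simp add: numeral_2_eq_2)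

lemma E_Suc: "qpoch (Q^(n+1-Suc i)) Q (Suc i) = (1 - Q^n) * qpoch (Q^(n-1+1-i)) Q i"
proof (cases "i < n")
  case True
  then have a: "n+1-Suc i = n - i" "n-1+1-i = n-i" by auto
  have "Q^i * Q^(n-i) = Q^n" using True by (simp flip: power_add)
  then show ?thesis unfolding a by (simp add: qpoch_Suc mult.commute)
next
  case False
  then have a: "n+1-Suc i = 0" by simp
  show ?thesis
  proof (cases "n = 0")
    case True thus ?thesis unfolding a by (simp add: qpoch_one)
  next
    case False
    with \<open>\<not> i < n\<close> have "n-1+1-i = 0" "i > 0" by auto
    thus ?thesis unfolding a by (simp add: qpoch_one)
  qed
qed

context
  fixes Q :: "'a::idom"
  assumes good: "\<And>k. qpoch Q Q k \<noteq> 0"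
begin

lemma L1: "R n (Q*s) Q = R n s Q - s*(1-Q^n)*R (n-1) s Q"
proof (cases n)
  case 0 thus ?thesis by simp
next
  case (Suc n)
  have "R (Suc n) s Q - R (Suc n) (Q*s) Q = (\<Sum>j\<le>Suc n. gb Q (Suc n) j * (s^j - (Q*s)^j))"
    unfolding R_def by (simp add: sum_subtractf right_diff_distrib)
  also have "\<dots> = (\<Sum>i\<le>n. gb Q (Suc n) (Suc i) * (s^Suc i - (Q*s)^Suc i))"
    by (simp only: sum.atMost_Suc_shift) (simp del: gb.simps power_Suc)
  also have "\<dots> = (\<Sum>i\<le>n. s * (1-Q^Suc n) * (gb Q n i * s^i))"
  proof (rule sum.cong[OF refl])
    fix i
    have "gb Q (Suc n) (Suc i) * (s^Suc i - (Q*s)^Suc i) = s^Suc i * (gb Q (Suc n) (Suc i) * (1 - Q^Suc i))"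
      by (simp add: algebra_simps power_mult_distrib del: power_Suc)
    also have "\<dots> = s * (1-Q^Suc n) * (gb Q n i * s^i)"
      unfolding F3[OF good] by (simp add: algebra_simps)
    finally show "gb Q (Suc n) (Suc i) * (s^Suc i - (Q*s)^Suc i) = s * (1-Q^Suc n) * (gb Q n i * s^i)" .
  qed
  also have "\<dots> = s * (1-Q^Suc n) * R n s Q"
    unfolding R_def by (simp add: sum_distrib_left)
  finally show ?thesis using Suc by (simp add: algebra_simps)
qed

lemma R3: "R (Suc (Suc n)) s Q = (1+s) * R (Suc n) s Q - s*(1-Q^Suc n)*R n s Q"
  using R_Pascal[of "Suc n" s Q] L1[of "Suc n" s] by (simp add: algebra_simps)

lemma star: "R n (s*Q^m) Q = (\<Sum>j\<le>m. gb Q m j * ((-1)^j * s^j * Q^(j choose 2) * qpoch (Q^(n+1-j)) Q j * R (n-j) s Q))"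
proof -
  define a where "a = (\<lambda>n j. (-1)^j * s^j * Q^(j choose 2) * qpoch (Q^(n+1-j)) Q j * R (n-j) s Q)"
  have "R n (s*Q^m) Q = (\<Sum>j\<le>m. gb Q m j * a n j)"
  proof (induction m arbitrary: n)
    case 0 show ?case by (simp add: a_def)
  next
    case (Suc m)
    have "R n (s*Q^Suc m) Q = R n (Q*(s*Q^m)) Q" by (simp add: mult_ac)
    also have "\<dots> = R n (s*Q^m) Q - s*Q^m*(1-Q^n)*R (n-1) (s*Q^m) Q" by (rule L1)
    also have "\<dots> = (\<Sum>j\<le>m. gb Q m j * a n j) - s*Q^m*(1-Q^n)*(\<Sum>j\<le>m. gb Q m j * a (n-1) j)"
      using Suc.IH by simp
    also have "\<dots> = (\<Sum>j\<le>Suc m. gb Q (Suc m) j * a n j)"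
    proof -
      have e1: "(\<Sum>j\<le>Suc m. gb Q (Suc m) j * a n j) = a n 0 + (\<Sum>i\<le>m. gb Q m (Suc i) * a n (Suc i)) + (\<Sum>i\<le>m. Q^(m-i) * gb Q m i * a n (Suc i))"
      proof -
        have "(\<Sum>i\<le>m. gb Q (Suc m) (Suc i) * a n (Suc i)) = (\<Sum>i\<le>m. gb Q m (Suc i) * a n (Suc i) + Q^(m-i) * gb Q m i * a n (Suc i))"
          by (rule sum.cong[OF refl]) (simp del: gb.simps add: F2[OF good] distrib_right)
        then show ?thesis by (simp only: sum.atMost_Suc_shift) (simp del: gb.simps add: sum.distrib add.assoc)
      qed
      have e2: "a n 0 + (\<Sum>i\<le>m. gb Q m (Suc i) * a n (Suc i)) = (\<Sum>j\<le>m. gb Q m j * a n j)"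
        using sum.atMost_Suc_shift[of "\<lambda>j. gb Q m j * a n j" m] by (simp add: gb_zero)
      have e3: "(\<Sum>i\<le>m. Q^(m-i) * gb Q m i * a n (Suc i)) = - (s*Q^m*(1-Q^n)*(\<Sum>j\<le>m. gb Q m j * a (n-1) j))"
        unfolding sum_distrib_left sum_negf[symmetric]
      proof (rule sum.cong[OF refl])
        fix i assume "i \<in> {..m}"
        then have im: "i \<le> m" by simp
        have pw: "Q^(m-i) * Q^(Suc i choose 2) = Q^m * Q^(i choose 2)"
        proof -
          have "m - i + (Suc i choose 2) = m + (i choose 2)" using im by (simp add: choose2_Suc)
          thus ?thesis by (metis power_add)
        qed
        have nn: "n - Suc i = n - 1 - i" by simp
        have "Q^(m-i) * gb Q m i * a n (Suc i) = (Q^(m-i) * Q^(Suc i choose 2)) * gb Q m i * ((-1)^Suc i * s^Suc i * qpoch (Q^(n+1-Suc i)) Q (Suc i) * R (n - Suc i) s Q)"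
          unfolding a_def by (simp only: mult_ac)
        also have "\<dots> = - (s*Q^m*(1-Q^n)*(gb Q m i * a (n-1) i))"
          unfolding pw E_Suc nn a_def by (simp add: algebra_simps)
        finally show "Q^(m-i) * gb Q m i * a n (Suc i) = - (s*Q^m*(1-Q^n)*(gb Q m i * a (n-1) i))" .
      qed
      show ?thesis unfolding e1 e2 e3 by simp
    qed
    finally show ?case .
  qed
  then show ?thesis unfolding a_def .
qed

lemma L3: "Q = q^2 \<Longrightarrow> R k q Q = qpoch (-q) q k"
proof -
  assume Qq: "Q = q^2"
  have "R k q Q = qpoch (-q) q k \<and> R (Suc k) q Q = qpoch (-q) q (Suc k)"
  proof (induction k)
    case 0 show ?case by (simp add: R_def qpoch_Suc)
  next
    case (Suc k)
    define x where "x = q^Suc k"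
    have hx1: "q^k * (-q) = -x" unfolding x_def by (simp add: mult.commute)
    have hx2: "q^Suc k * (-q) = -(q*x)" unfolding x_def by (simp add: mult.commute)
    have hQ: "Q^Suc k = x*x" unfolding Qq x_def by (simp add: power_mult_distrib[symmetric] power2_eq_square power_mult[symmetric])
    have "R (Suc (Suc k)) q Q = (1+q) * R (Suc k) q Q - q*(1-Q^Suc k)*R k q Q" by (rule R3)
    also have "\<dots> = (1+q) * (qpoch (-q) q k * (1 - q^k * (-q))) - q*(1-Q^Suc k)*qpoch (-q) q k"
      using Suc.IH by (simp only: qpoch_Suc)
    also have "\<dots> = qpoch (-q) q k * ((1+q) * (1 + x) - q*(1-x*x))"
      unfolding hx1 hQ by (simp add: algebra_simps)
    also have "\<dots> = qpoch (-q) q k * ((1 + x) * (1 + q*x))" by (simp add: algebra_simps)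
    also have "\<dots> = qpoch (-q) q (Suc (Suc k))" unfolding qpoch_Suc hx1 hx2 by (simp add: algebra_simps)
    finally show ?case using Suc.IH by simp
  qed
  thus ?thesis by simp
qed

lemma L4: "Q = q \<Longrightarrow> R (2*n) (-1) Q = qpoch q (q^2) n \<and> R (2*n+1) (-1) Q = 0"
proof (induction n)
  case 0 show ?case by (simp add: R_def)
next
  case (Suc n)
  have a: "2 * Suc n = Suc (Suc (2*n))" "2 * Suc n + 1 = Suc (Suc (2*n+1))" by simp_all
  have hq: "(q^2)^n * q = q^(Suc (2*n))" by (simp only: power_mult[symmetric] power_Suc2)
  have "R (2 * Suc n) (-1) Q = qpoch q (q^2) n * (1 - q^Suc(2*n))"
    unfolding a R3 using Suc by (simp add: algebra_simps)
  moreover have "R (2 * Suc n + 1) (-1) Q = 0"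
  proof -
    have "R (2 * Suc n + 1) (-1) Q = R (Suc (Suc (2*n+1))) (-1) Q" by simp
    also have "\<dots> = (1 + -1) * R (Suc (2*n+1)) (-1) Q - (-1)*(1-Q^Suc(2*n+1)) * R (2*n+1) (-1) Q" by (rule R3)
    finally show ?thesis using Suc by simp
  qed
  ultimately show ?case by (simp only: qpoch_Suc hq)
qed

end



lemma poly_qX[simp]: "poly qX x = x" by (simp add: qX_def)

lemma qX_pow_ne1: "0 < N \<Longrightarrow> qX^N \<noteq> 1"
proof
  assume N: "0 < N" and h: "qX^N = 1"
  have "poly (qX^N) (2::int) = 2^N" by simp
  with h have "(2::int)^N = 1" by simp
  moreover have "(1::int) < 2^N" using N by (simp add: one_less_power)
  ultimately show False by simp
qed

lemma good_qX: "0 < e \<Longrightarrow> qpoch (qX^e) (qX^e) k \<noteq> 0"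
  unfolding qpoch_def
proof (subst prod_zero_iff, simp, safe)
  fix j assume e: "0 < e" and j: "j < k" and h: "1 - (qX^e)^j * qX^e = 0"
  have "(qX^e)^j * qX^e = qX^(e*j+e)" by (simp add: power_add power_mult)
  with h have "qX^(e*j+e) = 1" by simp
  with qX_pow_ne1[of "e*j+e"] e show False by simp
qed

lemma good1: "qpoch qX qX k \<noteq> 0" using good_qX[of 1 k] by simp
lemma good2: "qpoch (qX^2) (qX^2) k \<noteq> 0" using good_qX[of 2 k] by simp

lemma qb: fixes Q :: "'a::idom_divide" assumes good: "\<And>k. qpoch Q Q k \<noteq> 0"
  shows "qbinom Q n j = gb Q n j"
proof (cases "j \<le> n")
  case True
  have "qpoch Q Q n = gb Q n j * (qpoch Q Q j * qpoch Q Q (n-j))"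
    using gb_prod[OF True, of Q] by (metis mult.assoc)
  moreover have "qpoch Q Q j * qpoch Q Q (n-j) \<noteq> 0" using good by simp
  ultimately show ?thesis unfolding qbinom_def using True by simp
next
  case False thus ?thesis by (simp add: qbinom_def gb_zero)
qed

lemma rsR: fixes Q :: "'a::idom_divide" assumes good: "\<And>k. qpoch Q Q k \<noteq> 0"
  shows "rs n s Q = R n s Q"
  unfolding rs_def R_def qb[OF good] ..

lemma pw1: "x + y = z \<Longrightarrow> (q::'a::comm_ring_1)^x * q^y = q^z" by (metis power_add)
lemma pw2: "2*x + y = z \<Longrightarrow> ((q::'a::comm_ring_1)^2)^x * q^y = q^z" by (metis power_add power_mult)

lemma T1: "j + 2 * (j choose 2) = j^2"
proof (induction j)
  case 0 show ?case by simp
next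
  case (Suc j) thus ?case by (simp add: choose2_Suc power2_eq_square)
qed

lemma T2: fixes q :: "'a::comm_ring_1"
  shows "qpoch ((q^2)^(n+1-j)) (q^2) j * qpoch (-q) q (n-j) = qpoch (-q) q n * qpoch (q^(n+1-j)) q j"
proof (cases "j \<le> n")
  case True
  define a where "a = n - j"
  have n: "n = a + j" and n1: "n+1-j = Suc a" using True by (auto simp: a_def)
  have "qpoch ((q^2)^Suc a) (q^2) j = (\<Prod>t<j. (1 - q^t*q^Suc a) * (1 - q^(a+t)*(-q)))"
    unfolding qpoch_def
  proof (rule prod.cong[OF refl])
    fix t
    define u where "u = q^(t + Suc a)"
    have h1: "q^t*q^Suc a = u" unfolding u_def by (simp add: power_add)
    have h2: "q^(a+t)*q = u" unfolding u_def by (simp add: power_add mult_ac)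
    have "(q^2)^t*(q^2)^Suc a = (q^2)^(t+Suc a)" by (rule power_add[symmetric])
    also have "\<dots> = u*u" unfolding u_def by (simp only: power2_eq_square power_mult_distrib)
    finally have h3: "(q^2)^t*(q^2)^Suc a = u*u" .
    show "1 - (q^2)^t*(q^2)^Suc a = (1 - q^t*q^Suc a) * (1 - q^(a+t)*(-q))"
      using h1 h2 h3 by (simp add: algebra_simps)
  qed
  also have "\<dots> = qpoch (q^Suc a) q j * (\<Prod>t<j. 1 - q^(a+t)*(-q))"
    unfolding qpoch_def prod.distrib ..
  finally have L: "qpoch ((q^2)^Suc a) (q^2) j = qpoch (q^Suc a) q j * (\<Prod>t<j. 1 - q^(a+t)*(-q))" .
  show ?thesis unfolding n1 L unfolding n qpoch_add by (simp add: mult_ac)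
next
  case False
  then have "n+1-j = 0" "j > 0" by auto
  thus ?thesis by (simp add: qpoch_one)
qed

lemma prod_even: "(\<Prod>t<2*(k::nat). f t) = (\<Prod>u<k. f (2*u) * f (2*u+1))"
  by (induction k) (simp_all add: mult_ac)

lemma sum_even_odd: "(\<Sum>j\<le>(m::nat). f j) = (\<Sum>k\<le>m div 2. f (2*k)) + (\<Sum>k<(m+1) div 2. f (2*k+1))"
proof -
  have "(\<Sum>j\<le>2*M. f j) = (\<Sum>k\<le>M. f (2*k)) + (\<Sum>k<M. f (2*k+1)) \<and>
        (\<Sum>j\<le>2*M+1. f j) = (\<Sum>k\<le>M. f (2*k)) + (\<Sum>k<M+1. f (2*k+1))" for M
  proof (induction M)
    case 0 show ?case by simp
  next
    case (Suc M)
    have a: "2 * Suc M = Suc (2*M+1)" "2 * Suc M + 1 = Suc (Suc (2*M+1))" by simp_all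
    show ?case unfolding a using Suc by (simp add: algebra_simps)
  qed
  moreover obtain M where "m = 2*M \<or> m = 2*M+1" by (metis oddE evenE)
  ultimately show ?thesis by (auto simp: add.assoc)
qed

lemma neg1: "(-1::'a::comm_ring_1)^j * (-1)^j = 1"
  by (simp add: power_mult_distrib[symmetric])

lemma core: fixes q :: "'a::comm_ring_1"
  shows "qpoch (q^(2*a+1)) q (2*k) = (\<Prod>u<k. 1 - (q^2)^(a+u)*q) * qpoch (q^(2*a+2)) (q^2) k"
proof -
  have "qpoch (q^(2*a+1)) q (2*k) = (\<Prod>u<k. (1 - (q^2)^(a+u)*q) * (1 - (q^2)^u*q^(2*a+2)))"
    unfolding qpoch_def prod_even
  proof (rule prod.cong[OF refl])
    fix u
    have e1: "q^(2*u)*q^(2*a+1) = q^(2*a+2*u+1)" by (rule pw1) simp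
    have e2: "(q^2)^(a+u)*q = q^(2*a+2*u+1)" using pw2[of "a+u" 1 "2*a+2*u+1" q] by simp
    have e3: "q^(2*u+1)*q^(2*a+1) = q^(2*a+2*u+2)" by (rule pw1) simp
    have e4: "(q^2)^u*q^(2*a+2) = q^(2*a+2*u+2)" by (rule pw2) simp
    show "(1 - q^(2*u)*q^(2*a+1)) * (1 - q^(2*u+1)*q^(2*a+1)) = (1 - (q^2)^(a+u)*q) * (1 - (q^2)^u*q^(2*a+2))"
      unfolding e1 e2 e3 e4 ..
  qed
  also have "\<dots> = (\<Prod>u<k. 1 - (q^2)^(a+u)*q) * qpoch (q^(2*a+2)) (q^2) k"
    unfolding qpoch_def prod.distrib ..
  finally show ?thesis .
qed

lemma T4: fixes q :: "'a::comm_ring_1" assumes "k \<le> n"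
  shows "qpoch (q^(2*n+1-2*k)) q (2*k) * qpoch q (q^2) (n-k) = qpoch q (q^2) n * qpoch (q^(2*n+2-2*k)) (q^2) k"
proof -
  define a where "a = n - k"
  have n: "n = a + k" and x: "2*n+1-2*k = 2*a+1" "2*n+2-2*k = 2*a+2" "n - k = a" using assms by (auto simp: a_def)
  show ?thesis unfolding x core unfolding n qpoch_add by (simp add: mult_ac)
qed

lemma T5: fixes q :: "'a::comm_ring_1" assumes "k \<le> n"
  shows "qpoch (q^(2*n+1+1-(2*k+1))) q (2*k+1) * qpoch q (q^2) (n-k) = qpoch q (q^2) (n+1) * qpoch (q^(2*n+2-2*k)) (q^2) k"
proof -
  define a where "a = n - k"
  have n: "n + 1 = a + Suc k" and x: "2*n+1+1-(2*k+1) = 2*a+1" "2*n+2-2*k = 2*a+2" "n - k = a" using assms by (auto simp: a_def)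
  have e1: "q^(2*k)*q^(2*a+1) = q^(2*a+2*k+1)" by (rule pw1) simp
  have e2: "(q^2)^(a+k)*q = q^(2*a+2*k+1)" using pw2[of "a+k" 1 "2*a+2*k+1" q] by simp
  have l: "qpoch (q^(2*a+1)) q (2*k+1) = qpoch (q^(2*a+1)) q (2*k) * (1 - q^(2*k)*q^(2*a+1))"
    using qpoch_Suc[of "q^(2*a+1)" q "2*k"] by simp
  have r: "qpoch q (q^2) (a + Suc k) = qpoch q (q^2) a * ((\<Prod>t<k. 1 - (q^2)^(a+t)*q) * (1 - (q^2)^(a+k)*q))"
    by (simp only: qpoch_add prod.lessThan_Suc)
  show ?thesis unfolding x l e1 core n r e2 by (simp add: mult_ac)
qed

lemma Id1: "rs n (qX^(2*m+1)) (qX^2) = qpoch (-qX) qX n *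
   (\<Sum>j\<le>m. (-1) ^ j * qX ^ (j^2) * qbinom (qX ^ 2) m j * qpoch (qX ^ (n + 1 - j)) qX j)"
proof -
  have s: "qX^(2*m+1) = qX * (qX^2)^m" by (simp add: power_mult[symmetric] mult.commute)
  have "rs n (qX^(2*m+1)) (qX^2) = R n (qX*(qX^2)^m) (qX^2)" unfolding s by (rule rsR[OF good2])
  also have "\<dots> = (\<Sum>j\<le>m. gb (qX^2) m j * ((-1)^j * qX^j * (qX^2)^(j choose 2) * qpoch ((qX^2)^(n+1-j)) (qX^2) j * R (n-j) qX (qX^2)))"
    by (rule star[OF good2])
  also have "\<dots> = qpoch (-qX) qX n * (\<Sum>j\<le>m. (-1) ^ j * qX ^ (j^2) * qbinom (qX ^ 2) m j * qpoch (qX ^ (n + 1 - j)) qX j)"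
    unfolding sum_distrib_left
  proof (rule sum.cong[OF refl])
    fix j
    have a: "qX^j * (qX^2)^(j choose 2) = qX^(j^2)" using pw2[of "j choose 2" j "j^2" qX] T1[of j]
      by (simp add: mult.commute)
    have b: "R (n-j) qX (qX^2) = qpoch (-qX) qX (n-j)" by (rule L3[OF good2 refl])
    have "gb (qX^2) m j * ((-1)^j * qX^j * (qX^2)^(j choose 2) * qpoch ((qX^2)^(n+1-j)) (qX^2) j * R (n-j) qX (qX^2))
       = (-1)^j * (qX^j * (qX^2)^(j choose 2)) * gb (qX^2) m j * (qpoch ((qX^2)^(n+1-j)) (qX^2) j * qpoch (-qX) qX (n-j))"
      unfolding b by (simp add: mult_ac)
    also have "\<dots> = qpoch (-qX) qX n * ((-1) ^ j * qX ^ (j^2) * qbinom (qX ^ 2) m j * qpoch (qX ^ (n + 1 - j)) qX j)"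
      unfolding a T2 qb[OF good2] by (simp add: mult_ac)
    finally show "gb (qX^2) m j * ((-1)^j * qX^j * (qX^2)^(j choose 2) * qpoch ((qX^2)^(n+1-j)) (qX^2) j * R (n-j) qX (qX^2))
       = qpoch (-qX) qX n * ((-1) ^ j * qX ^ (j^2) * qbinom (qX ^ 2) m j * qpoch (qX ^ (n + 1 - j)) qX j)" .
  qed
  finally show ?thesis .
qed

lemma L4e: "R (2*n) (-1) qX = qpoch qX (qX^2) n" using L4[OF good1 refl] by blast
lemma L4o: "R (2*n+1) (-1) qX = 0" using L4[OF good1 refl] by blast

lemma Id2: "rs (2*n) (- (qX ^ m)) qX = qpoch qX (qX ^ 2) n *
     (\<Sum>k\<le>m div 2. qX ^ ((2*k) choose 2) * qbinom qX m (2*k) * qpoch (qX ^ (2*n + 2 - 2*k)) (qX ^ 2) k)"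
proof -
  define F where "F = (\<lambda>j. gb qX m j * ((-1)^j * (-1)^j * qX^(j choose 2) * qpoch (qX^(2*n+1-j)) qX j * R (2*n-j) (-1) qX))"
  have "rs (2*n) (- (qX ^ m)) qX = R (2*n) ((-1) * qX^m) qX" using rsR[OF good1] by simp
  also have "\<dots> = (\<Sum>j\<le>m. F j)" unfolding F_def by (rule star[OF good1])
  also have "\<dots> = (\<Sum>k\<le>m div 2. F (2*k)) + (\<Sum>k<(m+1) div 2. F (2*k+1))" by (rule sum_even_odd)
  also have "(\<Sum>k<(m+1) div 2. F (2*k+1)) = 0"
  proof (rule sum.neutral, rule ballI)
    fix k
    show "F (2*k+1) = 0"
    proof (cases "k < n")
      case True
      then have "2*n - (2*k+1) = 2*(n-k-1)+1" by simp
      then show ?thesis unfolding F_def by (simp only: L4o)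
    next
      case False
      then have "2*n+1-(2*k+1) = 0" by simp
      then show ?thesis unfolding F_def by (simp add: qpoch_one)
    qed
  qed
  also have "(\<Sum>k\<le>m div 2. F (2*k)) = qpoch qX (qX ^ 2) n *
     (\<Sum>k\<le>m div 2. qX ^ ((2*k) choose 2) * qbinom qX m (2*k) * qpoch (qX ^ (2*n + 2 - 2*k)) (qX ^ 2) k)"
    unfolding sum_distrib_left
  proof (rule sum.cong[OF refl])
    fix k
    show "F (2*k) = qpoch qX (qX ^ 2) n * (qX ^ ((2*k) choose 2) * qbinom qX m (2*k) * qpoch (qX ^ (2*n + 2 - 2*k)) (qX ^ 2) k)"
    proof (cases "k \<le> n")
      case True
      then have "2*n - 2*k = 2*(n-k)" by simp
      then have r: "R (2*n-2*k) (-1) qX = qpoch qX (qX^2) (n-k)" by (simp only: L4e)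
      show ?thesis unfolding F_def r neg1 qb[OF good1]
        using T4[OF True, of qX] by (simp add: mult_ac)
    next
      case False
      then have "2*n+1-2*k = 0" "2*n+2-2*k = 0" "0 < k" by auto
      then show ?thesis unfolding F_def by (simp add: qpoch_one)
    qed
  qed
  finally show ?thesis by simp
qed

lemma Id3: "rs (2*n+1) (- (qX ^ m)) qX = qpoch qX (qX ^ 2) (n + 1) *
     (\<Sum>k<(m + 1) div 2. qX ^ ((2*k+1) choose 2) * qbinom qX m (2*k+1) * qpoch (qX ^ (2*n + 2 - 2*k)) (qX ^ 2) k)"
proof -
  define F where "F = (\<lambda>j. gb qX m j * ((-1)^j * (-1)^j * qX^(j choose 2) * qpoch (qX^(2*n+1+1-j)) qX j * R (2*n+1-j) (-1) qX))"
  have "rs (2*n+1) (- (qX ^ m)) qX = R (2*n+1) ((-1) * qX^m) qX" using rsR[OF good1] by simp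
  also have "\<dots> = (\<Sum>j\<le>m. F j)" unfolding F_def by (rule star[OF good1])
  also have "\<dots> = (\<Sum>k\<le>m div 2. F (2*k)) + (\<Sum>k<(m+1) div 2. F (2*k+1))" by (rule sum_even_odd)
  also have "(\<Sum>k\<le>m div 2. F (2*k)) = 0"
  proof (rule sum.neutral, rule ballI)
    fix k
    show "F (2*k) = 0"
    proof (cases "k \<le> n")
      case True
      then have "2*n + 1 - 2*k = 2*(n-k)+1" by simp
      then show ?thesis unfolding F_def by (simp only: L4o)
    next
      case False
      then have "2*n+1+1-2*k = 0" "0 < 2*k" by auto
      then show ?thesis unfolding F_def by (simp add: qpoch_one)
    qed
  qed
  also have "(\<Sum>k<(m+1) div 2. F (2*k+1)) = qpoch qX (qX ^ 2) (n+1) *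
     (\<Sum>k<(m + 1) div 2. qX ^ ((2*k+1) choose 2) * qbinom qX m (2*k+1) * qpoch (qX ^ (2*n + 2 - 2*k)) (qX ^ 2) k)"
    unfolding sum_distrib_left
  proof (rule sum.cong[OF refl])
    fix k
    show "F (2*k+1) = qpoch qX (qX ^ 2) (n+1) * (qX ^ ((2*k+1) choose 2) * qbinom qX m (2*k+1) * qpoch (qX ^ (2*n + 2 - 2*k)) (qX ^ 2) k)"
    proof (cases "k \<le> n")
      case True
      then have "2*n + 1 - (2*k+1) = 2*(n-k)" by simp
      then have r: "R (2*n+1-(2*k+1)) (-1) qX = qpoch qX (qX^2) (n-k)" by (simp only: L4e)
      show ?thesis unfolding F_def r neg1 qb[OF good1]
        using T5[OF True, of qX] by (simp add: mult_ac)
    next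
      case False
      then have "2*n+1+1-(2*k+1) = 0" "2*n+2-2*k = 0" "0 < k" by auto
      then show ?thesis unfolding F_def by (simp add: qpoch_one)
    qed
  qed
  finally show ?thesis by simp
qed


theorem corollary2p1:
  fixes m n :: nat
  shows "qpoch (- qX) qX n dvd rs n (qX ^ (2*m+1)) (qX ^ 2) \<and>
      qpoch qX (qX ^ 2) ((n + 1) div 2) dvd rs n (- (qX ^ m)) qX \<and>
      rs n (qX ^ (2*m+1)) (qX ^ 2) = qpoch (- qX) qX n *
           (\<Sum>j\<le>m. (-1) ^ j * qX ^ (j^2) * qbinom (qX ^ 2) m j * qpoch (qX ^ (n + 1 - j)) qX j) \<and>
      rs (2*n) (- (qX ^ m)) qX = qpoch qX (qX ^ 2) n *
           (\<Sum>k\<le>m div 2. qX ^ ((2*k) choose 2) * qbinom qX m (2*k) * qpoch (qX ^ (2*n + 2 - 2*k)) (qX ^ 2) k) \<and>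
      rs (2*n+1) (- (qX ^ m)) qX = qpoch qX (qX ^ 2) (n + 1) *
           (\<Sum>k<(m + 1) div 2. qX ^ ((2*k+1) choose 2) * qbinom qX m (2*k+1) * qpoch (qX ^ (2*n + 2 - 2*k)) (qX ^ 2) k)"
proof -
  have p2: "qpoch qX (qX ^ 2) ((n + 1) div 2) dvd rs n (- (qX ^ m)) qX"
  proof (cases "even n")
    case True
    then obtain k where k: "n = 2*k" by blast
    show ?thesis using Id2[of k m] k by (simp add: dvd_triv_left)
  next
    case False
    then obtain k where k: "n = 2*k+1" using oddE by blast
    have "(n+1) div 2 = k + 1" using k by simp
    then show ?thesis using Id3[of k m] k by (simp only: dvd_triv_left)
  qed
  have p1: "qpoch (- qX) qX n dvd rs n (qX ^ (2*m+1)) (qX ^ 2)"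
    unfolding Id1 by (rule dvd_triv_left)
  show ?thesis using p1 p2 Id1 Id2 Id3 by blast
qed

end
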